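(* Let $m_\alpha>0$ and $m_\beta>0$ be two masses, let $t_1<t_2$, and let $(q_{\alpha 1},p_{\alpha 1})$, $(q_{\beta 1},p_{\beta 1})\in\mathbb{R}^3\times\mathbb{R}^3$ be initial positions and momenta. For $\gamma\in\{\alpha,\beta\}$ let $(q_\gamma(t),p_\gamma(t))$ be the classical trajectory of a particle of mass $m_\gamma$ governed by the Hamiltonian $H_{m_\gamma}$ (described in the context) with $(q_\gamma(t_1),p_\gamma(t_1))=(q_{\gamma 1},p_{\gamma 1})$, and set $(q_{\gamma 2},p_{\gamma 2})=(q_\gamma(t_2),p_\gamma(t_2))$. Then \[ \frac{S_{cl}(t_2,t_1,q_{\alpha 1},p_{\alpha 1})}{m_\alpha}-\frac12\Big(\frac{p_{\alpha 2}}{m_\alpha}+\frac{p_{\beta 2}}{m_\beta}\Big)\cdot q_{\alpha 2}+\frac12\Big(\frac{p_{\alpha 1}}{m_\alpha}+\frac{p_{\beta 1}}{m_\beta}\Big)\cdot q_{\alpha 1} \] \[ =\frac{S_{cl}(t_2,t_1,q_{\beta 1},p_{\beta 1})}{m_\beta}-\frac12\Big(\frac{p_{\alpha 2}}{m_\alpha}+\frac{p_{\beta 2}}{m_\beta}\Big)\cdot q_{\beta 2}+\frac12\Big(\frac{p_{\alpha 1}}{m_\alpha}+\frac{p_{\beta 1}}{m_\beta}\Big)\cdot q_{\beta 1}, \] where the action on the left is computed for mass $m_\alpha$ and the one on the right for mass $m_\beta$. Equivalently, \[ \Big[\tfrac{S_{cl}(t_2,t_1,q_{\alpha 1},p_{\alpha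 1})}{m_\alpha}-\tfrac{p_{\alpha 2}}{m_\alpha}\cdot q_{\alpha 2}+\tfrac{p_{\alpha 1}}{m_\alpha}\cdot q_{\alpha 1}\Big]-\Big[\tfrac{S_{cl}(t_2,t_1,q_{\beta 1},p_{\beta 1})}{m_\beta}-\tfrac{p_{\beta 2}}{m_\beta}\cdot q_{\beta 2}+\tfrac{p_{\beta 1}}{m_\beta}\cdot q_{\beta 1}\Big] =\Big(\tfrac{p_{\beta 2}}{m_\beta}-\tfrac{p_{\alpha 2}}{m_\alpha}\Big)\cdot\tfrac{q_{\alpha 2}+q_{\beta 2}}{2}-\Big(\tfrac{p_{\beta 1}}{m_\beta}-\tfrac{p_{\alpha 1}}{m_\alpha}\Big)\cdot\tfrac{q_{\alpha 1}+q_{\beta 1}}{2}. \]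
   Context: For a particle of mass $m>0$ with position $q\in\mathbb{R}^3$ and momentum $p\in\mathbb{R}^3$, the (time-dependent) external Hamiltonian is \[ H_m(q,p,t)=\frac{1}{2m}\,p\cdot G(t)\,p-\frac{m}{2}\,q\cdot\Gamma(t)\,q-\Omega(t)\cdot(q\times p)-m\,g(t)\cdot q, \] where $G(t)$ is a continuous family of real symmetric invertible $3\times3$ matrices, $\Gamma(t)$ a continuous family of real symmetric $3\times 3$ matrices (gravity gradient), $\Omega(t)\in\mathbb{R}^3$ a continuous rotation vector and $g(t)\in\mathbb{R}^3$ a continuous gravity vector; the functions $G,\Gamma,\Omega,g$ are the same for all masses. The classical trajectory of mass $m$ is the solution of Hamilton's equations $\dot q=\partial_p H_m$, $\dot p=-\partial_q H_m$ with the given initial data. The classical action is $S_{cl}(t_2,t_1,q_1,p_1)=\int_{t_1}^{t_2}\big(p\cdot\dot q-H_m(q,p,t)\big)\,dt$ evaluated along the classical trajectory of mass $m$ starting from $(q_1,p_1)$ at time $t_1$. A dot between vectors denotes the Euclidean inner product. *)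

theory Defs
  imports "HOL-Analysis.Analysis"
begin

definition Ham ::
  "(real \<Rightarrow> real^3^3) \<Rightarrow> (real \<Rightarrow> real^3^3) \<Rightarrow> (real \<Rightarrow> real^3) \<Rightarrow> (real \<Rightarrow> real^3)
   \<Rightarrow> real \<Rightarrow> real^3 \<Rightarrow> real^3 \<Rightarrow> real \<Rightarrow> real" where
  "Ham G Gam Om g m q p t =
     (1 / (2 * m)) * (p \<bullet> (G t *v p)) - (m / 2) * (q \<bullet> (Gam t *v q))
     - Om t \<bullet> cross3 q p - m * (g t \<bullet> q)"

definition hamilton_traj ::
  "(real \<Rightarrow> real^3^3) \<Rightarrow> (real \<Rightarrow> real^3^3) \<Rightarrow> (real \<Rightarrow> real^3) \<Rightarrow> (real \<Rightarrow> real^3)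
   \<Rightarrow> real \<Rightarrow> real \<Rightarrow> real \<Rightarrow> (real \<Rightarrow> real^3) \<Rightarrow> (real \<Rightarrow> real^3) \<Rightarrow> bool" where
  "hamilton_traj G Gam Om g m t1 t2 q p \<longleftrightarrow>
     (\<forall>t\<in>{t1..t2}. \<exists>dq dp.
        (q has_vector_derivative dq) (at t within {t1..t2}) \<and>
        (p has_vector_derivative dp) (at t within {t1..t2}) \<and>
        ((\<lambda>y. Ham G Gam Om g m (q t) y t) has_derivative (\<lambda>v. dq \<bullet> v)) (at (p t)) \<and>
        ((\<lambda>x. Ham G Gam Om g m x (p t) t) has_derivative (\<lambda>v. - (dp \<bullet> v))) (at (q t)))"

definition action ::
  "(real \<Rightarrow> real^3^3) \<Rightarrow> (real \<Rightarrow> real^3^3) \<Rightarrow> (real \<Rightarrow> real^3) \<Rightarrow> (real \<Rightarrow> real^3)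
   \<Rightarrow> real \<Rightarrow> real \<Rightarrow> real \<Rightarrow> (real \<Rightarrow> real^3) \<Rightarrow> (real \<Rightarrow> real^3) \<Rightarrow> real" where
  "action G Gam Om g m t1 t2 q p =
     integral {t1..t2} (\<lambda>t. p t \<bullet> vector_derivative q (at t within {t1..t2})
                             - Ham G Gam Om g m (q t) (p t) t)"

end

theory Submission
  imports Defs
begin

lemma lin_cross:
  "bounded_linear (cross3 q)" "bounded_linear (\<lambda>x. cross3 x p)"
  using bilinear_cross unfolding bilinear_def
  by (auto simp: linear_conv_bounded_linear[symmetric])

lemma Ham_dp:
  assumes "m \<noteq> 0"
  shows "((\<lambda>y. Ham G Gam Om g m q y t) has_derivative
     (\<lambda>v. (1/(2*m)) * (v \<bullet> (G t *v y) + y \<bullet> (G t *v v)) - Om t \<bullet> cross3 q v)) (at y)"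
  unfolding Ham_def using assms
  by (auto intro!: derivative_eq_intros bounded_linear_imp_has_derivative[OF lin_cross(1)]
        matrix_vector_mul_bounded_linear[THEN bounded_linear_imp_has_derivative] simp: field_simps)

lemma Ham_dq:
  "((\<lambda>x. Ham G Gam Om g m x p t) has_derivative
     (\<lambda>v. - (m/2) * (v \<bullet> (Gam t *v x) + x \<bullet> (Gam t *v v)) - Om t \<bullet> cross3 v p - m * (g t \<bullet> v))) (at x)"
  unfolding Ham_def 
  by (auto intro!: derivative_eq_intros bounded_linear_imp_has_derivative[OF lin_cross(2)]
        matrix_vector_mul_bounded_linear[THEN bounded_linear_imp_has_derivative] simp: field_simps)
lemma traj_pt:
  assumes m: "m \<noteq> 0" and t12: "t1 < t2" and tr: "hamilton_traj G Gam Om g m t1 t2 q p"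
    and t: "t \<in> {t1..t2}"
  defines "vq \<equiv> vector_derivative q (at t within {t1..t2})"
    and "vp \<equiv> vector_derivative p (at t within {t1..t2})"
  shows "(q has_vector_derivative vq) (at t within {t1..t2})"
    "(p has_vector_derivative vp) (at t within {t1..t2})"
    "\<And>v. vq \<bullet> v = (1/(2*m)) * (v \<bullet> (G t *v p t) + p t \<bullet> (G t *v v)) - Om t \<bullet> cross3 (q t) v"
    "\<And>v. vp \<bullet> v = (m/2) * (v \<bullet> (Gam t *v q t) + q t \<bullet> (Gam t *v v)) + Om t \<bullet> cross3 v (p t) + m * (g t \<bullet> v)"
proof -
  obtain dq dp where dq: "(q has_vector_derivative dq) (at t within {t1..t2})"
    and dp: "(p has_vector_derivative dp) (at t within {t1..t2})"
    and hp: "((\<lambda>y. Ham G Gam Om g m (q t) y t) has_derivative (\<lambda>v. dq \<bullet> v)) (at (p t))"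
    and hq: "((\<lambda>x. Ham G Gam Om g m x (p t) t) has_derivative (\<lambda>v. - (dp \<bullet> v))) (at (q t))"
    using tr t unfolding hamilton_traj_def by blast
  have e1: "vq = dq" unfolding vq_def using vector_derivative_within_closed_interval[OF t12 t dq] .
  have e2: "vp = dp" unfolding vp_def using vector_derivative_within_closed_interval[OF t12 t dp] .
  show "(q has_vector_derivative vq) (at t within {t1..t2})" using dq e1 by simp
  show "(p has_vector_derivative vp) (at t within {t1..t2})" using dp e2 by simp
  fix v
  have "(\<lambda>v. dq \<bullet> v) = (\<lambda>v. (1/(2*m)) * (v \<bullet> (G t *v p t) + p t \<bullet> (G t *v v)) - Om t \<bullet> cross3 (q t) v)"
    using has_derivative_unique[OF hp Ham_dp[OF m]] .
  then show "vq \<bullet> v = (1/(2*m)) * (v \<bullet> (G t *v p t) + p t \<bullet> (G t *v v)) - Om t \<bullet> cross3 (q t) v"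
    using e1 by metis
  have "(\<lambda>v. - (dp \<bullet> v)) = (\<lambda>v. - (m/2) * (v \<bullet> (Gam t *v q t) + q t \<bullet> (Gam t *v v)) - Om t \<bullet> cross3 v (p t) - m * (g t \<bullet> v))"
    using has_derivative_unique[OF hq Ham_dq] .
  then have "- (dp \<bullet> v) = - (m/2) * (v \<bullet> (Gam t *v q t) + q t \<bullet> (Gam t *v v)) - Om t \<bullet> cross3 v (p t) - m * (g t \<bullet> v)"
    by metis
  then show "vp \<bullet> v = (m/2) * (v \<bullet> (Gam t *v q t) + q t \<bullet> (Gam t *v v)) + Om t \<bullet> cross3 v (p t) + m * (g t \<bullet> v)"
    using e2 by simp
qed

lemma traj_cont:
  assumes m: "m \<noteq> 0" and t12: "t1 < t2" and tr: "hamilton_traj G Gam Om g m t1 t2 q p"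
    and gc: "continuous_on UNIV g"
  shows "continuous_on {t1..t2} (\<lambda>t. g t \<bullet> q t)"
proof -
  have "continuous_on {t1..t2} q"
    unfolding continuous_on_eq_continuous_within
    using traj_pt(1)[OF m t12 tr] has_vector_derivative_continuous by blast
  moreover have "continuous_on {t1..t2} g" using gc continuous_on_subset by blast
  ultimately show ?thesis by (intro continuous_on_inner)
qed

lemma action_eq:
  assumes m: "m \<noteq> 0" and t12: "t1 < t2" and tr: "hamilton_traj G Gam Om g m t1 t2 q p"
    and gc: "continuous_on UNIV g"
  shows "action G Gam Om g m t1 t2 q p = (1/2) * (q t2 \<bullet> p t2 - q t1 \<bullet> p t1)
     + (m/2) * integral {t1..t2} (\<lambda>t. g t \<bullet> q t)"
proof -
  let ?I = "{t1..t2}"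
  define D where "D t = (1/2) * (q t \<bullet> vector_derivative p (at t within ?I) + vector_derivative q (at t within ?I) \<bullet> p t)" for t
  have hD: "(D has_integral ((1/2) * (q t2 \<bullet> p t2) - (1/2) * (q t1 \<bullet> p t1))) ?I"
  proof (rule fundamental_theorem_of_calculus)
    show "t1 \<le> t2" using t12 by simp
    fix t assume t: "t \<in> ?I"
    show "((\<lambda>t. (1/2) * (q t \<bullet> p t)) has_vector_derivative D t) (at t within ?I)"
      unfolding D_def
      using bounded_bilinear.has_vector_derivative[OF bounded_bilinear_inner traj_pt(1,2)[OF m t12 tr t]]
      by (auto intro!: derivative_eq_intros)
  qed
  have hc: "((\<lambda>t. (m/2) * (g t \<bullet> q t)) has_integral (m/2) * integral ?I (\<lambda>t. g t \<bullet> q t)) ?I"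
    using has_integral_mult_right[OF integrable_integral[OF integrable_continuous_interval[OF traj_cont[OF m t12 tr gc]]]] .
  have "((\<lambda>t. p t \<bullet> vector_derivative q (at t within ?I) - Ham G Gam Om g m (q t) (p t) t) has_integral
       ((1/2) * (q t2 \<bullet> p t2) - (1/2) * (q t1 \<bullet> p t1)) + (m/2) * integral ?I (\<lambda>t. g t \<bullet> q t)) ?I"
  proof (rule has_integral_eq[OF _ has_integral_add[OF hD hc]])
    fix t assume t: "t \<in> ?I"
    note f = traj_pt(3,4)[OF m t12 tr t]
    have a: "vector_derivative q (at t within ?I) \<bullet> p t = (1/(2*m)) * (p t \<bullet> (G t *v p t) + p t \<bullet> (G t *v p t)) - Om t \<bullet> cross3 (q t) (p t)"
      by (rule f(1))
    have b: "vector_derivative p (at t within ?I) \<bullet> q t = (m/2) * (q t \<bullet> (Gam t *v q t) + q t \<bullet> (Gam t *v q t)) + Om t \<bullet> cross3 (q t) (p t) + m * (g t \<bullet> q t)"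
      by (rule f(2))
    show "D t + (m/2) * (g t \<bullet> q t) = p t \<bullet> vector_derivative q (at t within ?I) - Ham G Gam Om g m (q t) (p t) t"
      unfolding D_def Ham_def using a b m
      by (simp add: inner_commute[of "q t"] inner_commute[of "p t" "vector_derivative q (at t within ?I)"] field_simps)
  qed
  then show ?thesis unfolding action_def by (simp add: integral_unique algebra_simps)
qed
lemma key_deriv:
  assumes ma: "ma \<noteq> 0" and mb: "mb \<noteq> 0" and t12: "t1 < t2"
    and tra: "hamilton_traj G Gam Om g ma t1 t2 qa pa"
    and trb: "hamilton_traj G Gam Om g mb t1 t2 qb pb"
    and t: "t \<in> {t1..t2}"
  shows "((\<lambda>t. (1/2) * (((1/ma) *\<^sub>R pa t + (1/mb) *\<^sub>R pb t) \<bullet> (qa t - qb t))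
          - (1/2) * (qa t \<bullet> pa t) / ma + (1/2) * (qb t \<bullet> pb t) / mb)
        has_vector_derivative ((1/2) * (g t \<bullet> qa t - g t \<bullet> qb t))) (at t within {t1..t2})"
proof -
  let ?I = "{t1..t2}"
  define vqa where "vqa = vector_derivative qa (at t within ?I)"
  define vpa where "vpa = vector_derivative pa (at t within ?I)"
  define vqb where "vqb = vector_derivative qb (at t within ?I)"
  define vpb where "vpb = vector_derivative pb (at t within ?I)"
  note A = traj_pt[OF ma t12 tra t, folded vqa_def vpa_def]
  note B = traj_pt[OF mb t12 trb t, folded vqb_def vpb_def]
  have d: "((\<lambda>t. (1/2) * (((1/ma) *\<^sub>R pa t + (1/mb) *\<^sub>R pb t) \<bullet> (qa t - qb t))
          - (1/2) * (qa t \<bullet> pa t) / ma + (1/2) * (qb t \<bullet> pb t) / mb)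
        has_vector_derivative
        ((1/2) * (((1/ma) *\<^sub>R pa t + (1/mb) *\<^sub>R pb t) \<bullet> (vqa - vqb) + ((1/ma) *\<^sub>R vpa + (1/mb) *\<^sub>R vpb) \<bullet> (qa t - qb t))
          - (1/2) * (qa t \<bullet> vpa + vqa \<bullet> pa t) / ma + (1/2) * (qb t \<bullet> vpb + vqb \<bullet> pb t) / mb))
        (at t within ?I)"
  proof -
    note bi = bounded_bilinear.has_vector_derivative[OF bounded_bilinear_inner]
    have h1: "((\<lambda>t. ((1/ma) *\<^sub>R pa t + (1/mb) *\<^sub>R pb t) \<bullet> (qa t - qb t)) has_vector_derivative
       (((1/ma) *\<^sub>R pa t + (1/mb) *\<^sub>R pb t) \<bullet> (vqa - vqb) + ((1/ma) *\<^sub>R vpa + (1/mb) *\<^sub>R vpb) \<bullet> (qa t - qb t))) (at t within ?I)"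
      by (intro bi derivative_intros A(1,2) B(1,2)
          bounded_linear.has_vector_derivative[OF bounded_linear_scaleR_right A(2)]
          bounded_linear.has_vector_derivative[OF bounded_linear_scaleR_right B(2)])
    have h2: "((\<lambda>t. qa t \<bullet> pa t) has_vector_derivative (qa t \<bullet> vpa + vqa \<bullet> pa t)) (at t within ?I)"
      by (intro bi A(1,2))
    have h3: "((\<lambda>t. qb t \<bullet> pb t) has_vector_derivative (qb t \<bullet> vpb + vqb \<bullet> pb t)) (at t within ?I)"
      by (intro bi B(1,2))
    note bl = bounded_linear.has_vector_derivative[OF bounded_linear_mult_right]
    have "((\<lambda>t. (1/2) * (((1/ma) *\<^sub>R pa t + (1/mb) *\<^sub>R pb t) \<bullet> (qa t - qb t))
          - (1/(2*ma)) * (qa t \<bullet> pa t) + (1/(2*mb)) * (qb t \<bullet> pb t))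
        has_vector_derivative
        ((1/2) * (((1/ma) *\<^sub>R pa t + (1/mb) *\<^sub>R pb t) \<bullet> (vqa - vqb) + ((1/ma) *\<^sub>R vpa + (1/mb) *\<^sub>R vpb) \<bullet> (qa t - qb t))
          - (1/(2*ma)) * (qa t \<bullet> vpa + vqa \<bullet> pa t) + (1/(2*mb)) * (qb t \<bullet> vpb + vqb \<bullet> pb t)))
        (at t within ?I)"
      by (intro has_vector_derivative_add has_vector_derivative_diff bl[OF h1] bl[OF h2] bl[OF h3])
    then show ?thesis by (simp add: field_simps)
  qed
  have e1: "vpa \<bullet> qb t = (ma/2) * (qb t \<bullet> (Gam t *v qa t) + qa t \<bullet> (Gam t *v qb t)) + Om t \<bullet> cross3 (qb t) (pa t) + ma * (g t \<bullet> qb t)"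
    by (rule A(4))
  have e2: "vqb \<bullet> pa t = (1/(2*mb)) * (pa t \<bullet> (G t *v pb t) + pb t \<bullet> (G t *v pa t)) - Om t \<bullet> cross3 (qb t) (pa t)"
    by (rule B(3))
  have e3: "vpb \<bullet> qa t = (mb/2) * (qa t \<bullet> (Gam t *v qb t) + qb t \<bullet> (Gam t *v qa t)) + Om t \<bullet> cross3 (qa t) (pb t) + mb * (g t \<bullet> qa t)"
    by (rule B(4))
  have e4: "vqa \<bullet> pb t = (1/(2*ma)) * (pb t \<bullet> (G t *v pa t) + pa t \<bullet> (G t *v pb t)) - Om t \<bullet> cross3 (qa t) (pb t)"
    by (rule A(3))
  have "(1/2) * (((1/ma) *\<^sub>R pa t + (1/mb) *\<^sub>R pb t) \<bullet> (vqa - vqb) + ((1/ma) *\<^sub>R vpa + (1/mb) *\<^sub>R vpb) \<bullet> (qa t - qb t))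
          - (1/2) * (qa t \<bullet> vpa + vqa \<bullet> pa t) / ma + (1/2) * (qb t \<bullet> vpb + vqb \<bullet> pb t) / mb
     = (1/2) * ((vpb \<bullet> qa t)/mb - (vpa \<bullet> qb t)/ma + (vqa \<bullet> pb t)/mb - (vqb \<bullet> pa t)/ma)"
    using ma mb
    by (simp add: inner_add_left inner_add_right inner_diff_left inner_diff_right
        inner_commute[of "pa t"] inner_commute[of "pb t"] inner_commute[of "qa t"] inner_commute[of "qb t"] field_simps)
  also have "\<dots> = (1/2) * (g t \<bullet> qa t - g t \<bullet> qb t)"
    unfolding e1 e2 e3 e4 using ma mb by (simp add: field_simps)
  finally have eq: "(1/2) * (((1/ma) *\<^sub>R pa t + (1/mb) *\<^sub>R pb t) \<bullet> (vqa - vqb) + ((1/ma) *\<^sub>R vpa + (1/mb) *\<^sub>R vpb) \<bullet> (qa t - qb t))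
          - (1/2) * (qa t \<bullet> vpa + vqa \<bullet> pa t) / ma + (1/2) * (qb t \<bullet> vpb + vqb \<bullet> pb t) / mb = (1/2) * (g t \<bullet> qa t - g t \<bullet> qb t)" .
  show ?thesis using d unfolding eq .
qed


lemma final_alg:
  fixes A B C D E H :: "real^3" and ma mb Ia Ib :: real
  assumes ma: "ma \<noteq> 0" and mb: "mb \<noteq> 0"
  and int: "(1/2) * (Ia - Ib) = ((1/2) * (((1/ma) *\<^sub>R A + (1/mb) *\<^sub>R B) \<bullet> (C - D))
          - (1/2) * (C \<bullet> A) / ma + (1/2) * (D \<bullet> B) / mb) - 
      ((1/2) * (((1/ma) *\<^sub>R A1 + (1/mb) *\<^sub>R B1) \<bullet> (C1 - D1))
          - (1/2) * (C1 \<bullet> A1) / ma + (1/2) * (D1 \<bullet> B1) / mb)"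
  shows "((1/2) * (C \<bullet> A - C1 \<bullet> A1) + (ma/2) * Ia) / ma
           - (1/2) * (((1/ma) *\<^sub>R A + (1/mb) *\<^sub>R B) \<bullet> C)
           + (1/2) * (((1/ma) *\<^sub>R A1 + (1/mb) *\<^sub>R B1) \<bullet> C1)
       = ((1/2) * (D \<bullet> B - D1 \<bullet> B1) + (mb/2) * Ib) / mb
           - (1/2) * (((1/ma) *\<^sub>R A + (1/mb) *\<^sub>R B) \<bullet> D)
           + (1/2) * (((1/ma) *\<^sub>R A1 + (1/mb) *\<^sub>R B1) \<bullet> D1)"
proof -
  have e1: "((1/2) * (C \<bullet> A - C1 \<bullet> A1) + (ma/2) * Ia) / ma = C \<bullet> A / (ma*2) - C1 \<bullet> A1 / (ma*2) + Ia/2"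
    using ma by (simp add: field_simps)
  have e2: "((1/2) * (D \<bullet> B - D1 \<bullet> B1) + (mb/2) * Ib) / mb = D \<bullet> B / (mb*2) - D1 \<bullet> B1 / (mb*2) + Ib/2"
    using mb by (simp add: field_simps)
  show ?thesis unfolding e1 e2 using int
    by (simp add: inner_add_left inner_add_right inner_diff_left inner_diff_right
        inner_commute[of C A] inner_commute[of D B] inner_commute[of C1 A1] inner_commute[of D1 B1] algebra_simps diff_divide_distrib)
qed

theorem theorem1:
  fixes G Gam :: "real \<Rightarrow> real^3^3" and Om g :: "real \<Rightarrow> real^3"
    and ma mb t1 t2 :: real
    and qa pa qb pb :: "real \<Rightarrow> real^3"
    and qa1 pa1 qb1 pb1 :: "real^3"
  assumes G_cont: "continuous_on UNIV G"
    and G_sym: "\<And>t. transpose (G t) = G t"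
    and G_inv: "\<And>t. invertible (G t)"
    and Gam_cont: "continuous_on UNIV Gam"
    and Gam_sym: "\<And>t. transpose (Gam t) = Gam t"
    and Om_cont: "continuous_on UNIV Om"
    and g_cont: "continuous_on UNIV g"
    and ma_pos: "ma > 0" and mb_pos: "mb > 0"
    and t12: "t1 < t2"
    and traj_a: "hamilton_traj G Gam Om g ma t1 t2 qa pa"
    and init_a: "qa t1 = qa1" "pa t1 = pa1"
    and traj_b: "hamilton_traj G Gam Om g mb t1 t2 qb pb"
    and init_b: "qb t1 = qb1" "pb t1 = pb1"
  shows "action G Gam Om g ma t1 t2 qa pa / ma
           - (1/2) * (((1/ma) *\<^sub>R pa t2 + (1/mb) *\<^sub>R pb t2) \<bullet> qa t2)
           + (1/2) * (((1/ma) *\<^sub>R pa1 + (1/mb) *\<^sub>R pb1) \<bullet> qa1)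
       = action G Gam Om g mb t1 t2 qb pb / mb
           - (1/2) * (((1/ma) *\<^sub>R pa t2 + (1/mb) *\<^sub>R pb t2) \<bullet> qb t2)
           + (1/2) * (((1/ma) *\<^sub>R pa1 + (1/mb) *\<^sub>R pb1) \<bullet> qb1)"
proof -
  let ?I = "{t1..t2}"
  have ma: "ma \<noteq> 0" and mb: "mb \<noteq> 0" using ma_pos mb_pos by auto
  define F where "F t = (1/2) * (((1/ma) *\<^sub>R pa t + (1/mb) *\<^sub>R pb t) \<bullet> (qa t - qb t))
          - (1/2) * (qa t \<bullet> pa t) / ma + (1/2) * (qb t \<bullet> pb t) / mb" for t
  have hF: "((\<lambda>t. (1/2) * (g t \<bullet> qa t - g t \<bullet> qb t)) has_integral (F t2 - F t1)) ?I"
    unfolding F_def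
    by (rule fundamental_theorem_of_calculus) (use t12 key_deriv[OF ma mb t12 traj_a traj_b] in auto)
  have ia: "(\<lambda>t. g t \<bullet> qa t) integrable_on ?I"
    by (rule integrable_continuous_interval[OF traj_cont[OF ma t12 traj_a g_cont]])
  have ib: "(\<lambda>t. g t \<bullet> qb t) integrable_on ?I"
    by (rule integrable_continuous_interval[OF traj_cont[OF mb t12 traj_b g_cont]])
  have "((\<lambda>t. (1/2) * (g t \<bullet> qa t - g t \<bullet> qb t)) has_integral
       (1/2) * (integral ?I (\<lambda>t. g t \<bullet> qa t) - integral ?I (\<lambda>t. g t \<bullet> qb t))) ?I"
    by (intro has_integral_mult_right has_integral_diff integrable_integral ia ib)
  then have int: "(1/2) * (integral ?I (\<lambda>t. g t \<bullet> qa t) - integral ?I (\<lambda>t. g t \<bullet> qb t)) = F t2 - F t1"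
    using hF has_integral_unique by blast
  show ?thesis
    unfolding action_eq[OF ma t12 traj_a g_cont] action_eq[OF mb t12 traj_b g_cont]
      init_a[symmetric] init_b[symmetric]
    by (rule final_alg[OF ma mb int[unfolded F_def]])
qed

end
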